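(* Let $q=2^f\geq 4$ and $I=\{0,\ f,\ 2f/\gcd(3,f),\ 4f/\gcd(3,f)\}$. Let $b\in\mathbb{F}_{q^2}^\times$ with $b+b^q=1$ and $b^{q+1}\neq 1$, and let $a\in\mathbb{F}_{q^2}^\times$ have order $q+1$ and satisfy: $(1+b+b^2)^{2^i}\neq a+a^{-1}+1$ for all $i\in I$; $(1+b+b^2)^{2^i}\neq a(1+b+b^3+b^4)+a^{-1}(b^2+b^3+b^4)$ for all $i\in I$; $a+a^{-1}+1\neq a(1+b+b^3+b^4)+a^{-1}(b^2+b^3+b^4)$; and $a+a^{-1}+1\neq 0$. Let \[ X=\begin{pmatrix}b&1&1\\ b^q&0&1\\ b^{q+1}&b&b^q\end{pmatrix},\quad Y=\begin{pmatrix}ab+a^{-1}b^q&0&a(b+b^{q+1})+a^{-1}(b^q+b^{q+1})\\ 0&1&0\\ a+a^{-1}&0&ab+a^{-1}b^q\end{pmatrix},\quad Z=\begin{pmatrix}1&0&1\\ 0&1&0\\ 0&0&1\end{pmatrix}. \] Then $\langle X,Y,Z\rangle$ is an irreducible subgroup of $\mathrm{SU}_3(q)$, i.e. it stabilizes no subspace of $\mathbb{F}_{q^2}^3$ of dimension $1$ or $2$.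
   Context: Here $\mathrm{SU}_3(q)=\{A\in\mathrm{SL}_3(q^2): \overline{A}^{T}WA=W\}$, where $\overline{(a_{ij})}=(a_{ij}^q)$ and $W=\begin{pmatrix}0&0&1\\0&1&0\\1&0&0\end{pmatrix}$; matrices act on row vectors in $\mathbb{F}_{q^2}^3$ by right multiplication. *)

theory Defs
  imports "HOL-Analysis.Analysis"
begin

definition mat3 :: "'a::zero \<Rightarrow> 'a \<Rightarrow> 'a \<Rightarrow> 'a \<Rightarrow> 'a \<Rightarrow> 'a \<Rightarrow> 'a \<Rightarrow> 'a \<Rightarrow> 'a \<Rightarrow> 'a^3^3" where
  "mat3 a11 a12 a13 a21 a22 a23 a31 a32 a33 =
     vector [vector [a11, a12, a13], vector [a21, a22, a23], vector [a31, a32, a33]]"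

definition Wmat :: "'a::{zero,one} ^3^3" where
  "Wmat = mat3 0 0 1 0 1 0 1 0 0"

definition frob_mat :: "nat \<Rightarrow> 'a::comm_ring_1 ^3^3 \<Rightarrow> 'a^3^3" where
  "frob_mat q A = (\<chi> i j. (A $ i $ j) ^ q)"

text \<open>SU_3(q) inside SL_3(q^2) (the field 'a is meant to be F_{q^2}).\<close>
definition SU3 :: "nat \<Rightarrow> ('a::field ^3^3) set" where
  "SU3 q = {A. det A = 1 \<and> transpose (frob_mat q A) ** Wmat ** A = Wmat}"

inductive_set gen_group :: "('a::field ^3^3) set \<Rightarrow> ('a ^3^3) set"
  for S :: "('a::field ^3^3) set" where
  one: "mat 1 \<in> gen_group S"
| gen: "s \<in> S \<Longrightarrow> s \<in> gen_group S"
| mult: "A \<in> gen_group S \<Longrightarrow> B \<in> gen_group S \<Longrightarrow> A ** B \<in> gen_group S"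
| inv: "A \<in> gen_group S \<Longrightarrow> matrix_inv A \<in> gen_group S"

definition has_order :: "'a::field \<Rightarrow> nat \<Rightarrow> bool" where
  "has_order a n \<longleftrightarrow> 0 < n \<and> a ^ n = 1 \<and> (\<forall>k. 0 < k \<and> k < n \<longrightarrow> a ^ k \<noteq> 1)"

definition irreducible3 :: "('a::field ^3^3) set \<Rightarrow> bool" where
  "irreducible3 G \<longleftrightarrow>
     \<not> (\<exists>U :: ('a^3) set. vec.subspace U \<and> vec.dim U \<in> {1, 2} \<and>
          (\<forall>g\<in>G. (\<lambda>v. v v* g) ` U = U))"

end

theory Submission
  imports Defs
begin

lemma mat3_nth [simp]:
  "mat3 a11 a12 a13 a21 a22 a23 a31 a32 a33 $ 1 $ 1 = a11"
  "mat3 a11 a12 a13 a21 a22 a23 a31 a32 a33 $ 1 $ 2 = a12"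
  "mat3 a11 a12 a13 a21 a22 a23 a31 a32 a33 $ 1 $ 3 = a13"
  "mat3 a11 a12 a13 a21 a22 a23 a31 a32 a33 $ 2 $ 1 = a21"
  "mat3 a11 a12 a13 a21 a22 a23 a31 a32 a33 $ 2 $ 2 = a22"
  "mat3 a11 a12 a13 a21 a22 a23 a31 a32 a33 $ 2 $ 3 = a23"
  "mat3 a11 a12 a13 a21 a22 a23 a31 a32 a33 $ 3 $ 1 = a31"
  "mat3 a11 a12 a13 a21 a22 a23 a31 a32 a33 $ 3 $ 2 = a32"
  "mat3 a11 a12 a13 a21 a22 a23 a31 a32 a33 $ 3 $ 3 = a33"
  by (simp_all add: mat3_def)

lemma mat3_eqI:
  "a11 = b11 \<Longrightarrow> a12 = b12 \<Longrightarrow> a13 = b13 \<Longrightarrow> a21 = b21 \<Longrightarrow> a22 = b22 \<Longrightarrow> a23 = b23 \<Longrightarrow>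
   a31 = b31 \<Longrightarrow> a32 = b32 \<Longrightarrow> a33 = b33 \<Longrightarrow>
   mat3 a11 a12 a13 a21 a22 a23 a31 a32 a33 = mat3 b11 b12 b13 b21 b22 b23 b31 b32 b33"
  by simp

lemma mat3_mult:
  fixes a11 :: "'a::comm_ring_1"
  shows "mat3 a11 a12 a13 a21 a22 a23 a31 a32 a33 ** mat3 b11 b12 b13 b21 b22 b23 b31 b32 b33 =
   mat3 (a11*b11 + a12*b21 + a13*b31) (a11*b12 + a12*b22 + a13*b32) (a11*b13 + a12*b23 + a13*b33)
        (a21*b11 + a22*b21 + a23*b31) (a21*b12 + a22*b22 + a23*b32) (a21*b13 + a22*b23 + a23*b33)
        (a31*b11 + a32*b21 + a33*b31) (a31*b12 + a32*b22 + a33*b32) (a31*b13 + a32*b23 + a33*b33)"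
  by (simp add: vec_eq_iff forall_3 matrix_matrix_mult_def sum_3)

lemma mat3_transpose:
  "transpose (mat3 a11 a12 a13 a21 a22 a23 a31 a32 a33) = mat3 a11 a21 a31 a12 a22 a32 a13 a23 a33"
  by (simp add: vec_eq_iff forall_3 transpose_def)

lemma mat3_frob:
  fixes a11 :: "'a::comm_ring_1"
  shows "frob_mat q (mat3 a11 a12 a13 a21 a22 a23 a31 a32 a33) =
    mat3 (a11^q) (a12^q) (a13^q) (a21^q) (a22^q) (a23^q) (a31^q) (a32^q) (a33^q)"
  by (simp add: vec_eq_iff forall_3 frob_mat_def)

lemma mat3_det:
  fixes a11 :: "'a::comm_ring_1"
  shows "det (mat3 a11 a12 a13 a21 a22 a23 a31 a32 a33) =
    a11 * a22 * a33 + a12 * a23 * a31 + a13 * a21 * a32 - a11 * a23 * a32 - a12 * a21 * a33 - a13 * a22 * a31"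
  by (simp add: det_3)

lemma mat3_vmult:
  fixes a11 :: "'a::comm_ring_1"
  shows "v v* mat3 a11 a12 a13 a21 a22 a23 a31 a32 a33 =
    vector [v$1*a11 + v$2*a21 + v$3*a31, v$1*a12 + v$2*a22 + v$3*a32, v$1*a13 + v$2*a23 + v$3*a33]"
  by (simp add: vec_eq_iff forall_3 vector_matrix_mult_def sum_3)

lemma card_zero_ring: "(of_nat CARD('a) :: 'a::{ring_1,finite}) = 0"
proof -
  have bij: "bij_betw (\<lambda>x::'a. x + 1) UNIV UNIV"
    by (rule bij_betwI[where g="\<lambda>x. x - 1"]) auto
  have "(\<Sum>x\<in>UNIV. id (x + 1)) = (\<Sum>x\<in>(UNIV::'a set). id x)"
    using sum.reindex_bij_betw[OF bij, of id] by simp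
  moreover have "(\<Sum>x\<in>UNIV. id (x + 1)) = (\<Sum>x\<in>(UNIV::'a set). id x) + of_nat CARD('a)"
    by (simp add: sum.distrib)
  ultimately show ?thesis by simp
qed

lemma fermat_field: "(x::'a::{field,finite}) ^ CARD('a) = x"
proof (cases "x = 0")
  case True then show ?thesis by simp
next
  case False
  let ?S = "UNIV - {0::'a}"
  have bij: "bij_betw (\<lambda>y. x * y) ?S ?S"
    by (rule bij_betwI[where g="\<lambda>y. y / x"]) (use False in auto)
  have "(\<Prod>y\<in>?S. id (x * y)) = (\<Prod>y\<in>?S. id y)"
    using prod.reindex_bij_betw[OF bij, of id] by simp
  moreover have "(\<Prod>y\<in>?S. id (x * y)) = x ^ card ?S * (\<Prod>y\<in>?S. id y)"
    by (simp add: prod.distrib)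
  moreover have "(\<Prod>y\<in>?S. id y) \<noteq> 0" by simp
  ultimately have "x ^ card ?S = 1" by simp
  moreover have "card ?S = CARD('a) - 1" by (simp add: card_Diff_singleton)
  moreover have "CARD('a) = Suc (CARD('a) - 1)" by simp
  ultimately have "x ^ (CARD('a) - 1) = 1" by simp
  then have "x ^ Suc (CARD('a) - 1) = x" by (simp only: power_Suc2) simp
  then show ?thesis using \<open>CARD('a) = Suc (CARD('a) - 1)\<close> by simp
qed

lemma frob2:
  assumes "(2::'a::comm_ring_1) = 0"
  shows "(x + y :: 'a) ^ (2 ^ n) = x ^ (2 ^ n) + y ^ (2 ^ n)"
proof (induction n)
  case 0 then show ?case by simp
next
  case (Suc n)
  have "(x + y) ^ (2 ^ Suc n) = ((x + y) ^ (2 ^ n)) ^ 2"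
    by (simp add: power_mult[symmetric] mult.commute)
  also have "\<dots> = (x ^ (2 ^ n)) ^ 2 + (y ^ (2 ^ n)) ^ 2 + 2 * x ^ (2 ^ n) * y ^ (2 ^ n)"
    unfolding Suc by (simp add: power2_eq_square algebra_simps)
  also have "\<dots> = x ^ (2 ^ Suc n) + y ^ (2 ^ Suc n)"
    using assms by (simp add: power_mult[symmetric] mult.commute)
  finally show ?case .
qed


lemma SU3_mult:
  fixes A B :: "'a::field^3^3"
  assumes fm: "\<And>M N :: 'a^3^3. frob_mat q (M ** N) = frob_mat q M ** frob_mat q N"
    and A: "A \<in> SU3 q" and B: "B \<in> SU3 q"
  shows "A ** B \<in> SU3 q"
proof -
  have "transpose (frob_mat q (A ** B)) ** Wmat ** (A ** B)
      = transpose (frob_mat q B) ** (transpose (frob_mat q A) ** Wmat ** A) ** B"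
    by (simp add: fm matrix_transpose_mul matrix_mul_assoc)
  also have "\<dots> = Wmat" using A B by (simp add: SU3_def)
  finally show ?thesis using A B by (simp add: SU3_def det_mul)
qed

lemma SU3_inv:
  fixes A :: "'a::field^3^3"
  assumes fm: "\<And>M N :: 'a^3^3. frob_mat q (M ** N) = frob_mat q M ** frob_mat q N"
    and f1: "frob_mat q (mat 1 :: 'a^3^3) = mat 1"
    and A: "A \<in> SU3 q"
  shows "matrix_inv A \<in> SU3 q"
proof -
  have dA: "det A = 1" and hA: "transpose (frob_mat q A) ** Wmat ** A = Wmat"
    using A by (auto simp: SU3_def)
  have "invertible A" using dA by (simp add: invertible_det_nz)
  then have inv: "A ** matrix_inv A = mat 1 \<and> matrix_inv A ** A = mat 1"
    unfolding invertible_def matrix_inv_def by (rule someI_ex)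
  let ?B = "matrix_inv A"
  have "det A * det ?B = 1" using inv by (metis det_I det_mul)
  then have dB: "det ?B = 1" using dA by simp
  have "transpose (frob_mat q ?B) ** Wmat ** ?B
      = transpose (frob_mat q ?B) ** (transpose (frob_mat q A) ** Wmat ** A) ** ?B"
    using hA by simp
  also have "\<dots> = transpose (frob_mat q (A ** ?B)) ** Wmat ** (A ** ?B)"
    by (simp add: fm matrix_transpose_mul matrix_mul_assoc)
  also have "\<dots> = Wmat" using inv f1 by simp
  finally show ?thesis using dB by (simp add: SU3_def)
qed

lemma gen_group_SU3:
  fixes S :: "('a::field^3^3) set"
  assumes fm: "\<And>M N :: 'a^3^3. frob_mat q (M ** N) = frob_mat q M ** frob_mat q N"
    and f1: "frob_mat q (mat 1 :: 'a^3^3) = mat 1"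
    and S: "S \<subseteq> SU3 q"
  shows "gen_group S \<subseteq> SU3 q"
proof
  fix A assume "A \<in> gen_group S"
  then show "A \<in> SU3 q"
  proof (induction rule: gen_group.induct)
    case one then show ?case using f1 by (simp add: SU3_def)
  next
    case (gen s) then show ?case using S by auto
  next
    case (mult A B) then show ?case using SU3_mult[OF fm] by blast
  next
    case (inv A) then show ?case using SU3_inv[OF fm f1] by blast
  qed
qed

theorem lemma3p5:
  fixes f q :: nat and a b :: "'a::{field,finite}"
  assumes hq: "q = 2 ^ f" and hq4: "q \<ge> 4"
    and hcard: "CARD('a) = q ^ 2"
    and hb0: "b \<noteq> 0" and hbtr: "b + b ^ q = 1" and hbn: "b ^ (q + 1) \<noteq> 1"
    and ha0: "a \<noteq> 0" and haord: "has_order a (q + 1)"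
    and h1: "\<forall>i\<in>{0, f, 2 * f div gcd 3 f, 4 * f div gcd 3 f}.
               (1 + b + b ^ 2) ^ (2 ^ i) \<noteq> a + inverse a + 1"
    and h2: "\<forall>i\<in>{0, f, 2 * f div gcd 3 f, 4 * f div gcd 3 f}.
               (1 + b + b ^ 2) ^ (2 ^ i) \<noteq>
                 a * (1 + b + b ^ 3 + b ^ 4) + inverse a * (b ^ 2 + b ^ 3 + b ^ 4)"
    and h3: "a + inverse a + 1 \<noteq> a * (1 + b + b ^ 3 + b ^ 4) + inverse a * (b ^ 2 + b ^ 3 + b ^ 4)"
    and h4: "a + inverse a + 1 \<noteq> 0"
  defines "X \<equiv> mat3 b 1 1  (b ^ q) 0 1  (b ^ (q + 1)) b (b ^ q)"
    and "Y \<equiv> mat3 (a * b + inverse a * b ^ q) 0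
                   (a * (b + b ^ (q + 1)) + inverse a * (b ^ q + b ^ (q + 1)))
                 0 1 0
                 (a + inverse a) 0 (a * b + inverse a * b ^ q)"
    and "Z \<equiv> mat3 1 0 1  0 1 0  0 0 1"
  shows "gen_group {X, Y, Z} \<subseteq> SU3 q \<and> irreducible3 (gen_group {X, Y, Z})"
proof -
  have q0: "q \<noteq> 0" using hq4 by simp
  have f0: "f > 0" using hq hq4 by (cases f) auto
  have "(of_nat (q ^ 2) :: 'a) = 0" using card_zero_ring[where 'a='a] hcard by simp
  then have "(2::'a) ^ (2 * f) = 0" unfolding hq by (simp add: power_mult[symmetric] mult.commute)
  then have c2: "(2::'a) = 0" by simp
  have n0: "(numeral (Num.Bit0 n)::'a) = 0" for n
    by (metis mult_2 mult_zero_left numeral_Bit0 c2)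
  have n1: "(numeral (Num.Bit1 n)::'a) = 1" for n
    by (metis add_0 mult_2 mult_zero_left numeral_Bit0 numeral_Bit1 c2)
  have m: "- x = (x::'a)" for x by (metis add_diff_cancel_right' diff_0 mult_2 mult_zero_left c2)
  have frob_add: "(x + y) ^ q = x ^ q + y ^ q" for x y :: 'a
    unfolding hq by (rule frob2[OF c2])
  have fermat: "x ^ q ^ 2 = x" for x :: 'a using fermat_field[of x] hcard by simp
  have fsum: "(\<Sum>k\<in>UNIV. g k) ^ q = (\<Sum>k\<in>UNIV. (g k) ^ q)" for g :: "3 \<Rightarrow> 'a"
    by (simp add: sum_3 frob_add)
  have fm: "frob_mat q (M ** N) = frob_mat q M ** frob_mat q N" for M N :: "'a^3^3"
    by (simp add: frob_mat_def matrix_matrix_mult_def vec_eq_iff fsum power_mult_distrib)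
  have f1: "frob_mat q (mat 1 :: 'a^3^3) = mat 1"
    using q0 by (simp add: frob_mat_def mat_def vec_eq_iff)
  have bq: "b ^ q = 1 + b" using hbtr m by (metis add_diff_cancel_left' diff_minus_eq_add add.commute)
  have bqq: "(1 + b) ^ q = b"
  proof -
    have "(1 + b) ^ q = (b ^ q) ^ q" using bq by simp
    also have "\<dots> = b" using fermat[of b] by (simp add: power_mult[symmetric] power2_eq_square)
    finally show ?thesis .
  qed
  define ai where "ai = inverse a"
  have aai: "a * ai = 1" using ha0 by (simp add: ai_def)
  have aq: "a ^ q = ai"
  proof -
    have "a ^ q * a = 1" using haord by (simp add: has_order_def power_Suc2[symmetric])
    then show ?thesis using ha0 unfolding ai_def by (simp add: field_simps)
  qed
  have aiq: "ai ^ q = a" using aq ha0 unfolding ai_def by (metis inverse_inverse_eq power_inverse)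
  have XS: "X \<in> SU3 q"
    unfolding SU3_def X_def
    apply (simp only: mem_Collect_eq mat3_det mat3_frob mat3_transpose Wmat_def mat3_mult)
    apply (intro conjI)
     apply (simp add: bq algebra_simps n0 n1 m power2_eq_square)
    apply (rule mat3_eqI)
            apply (simp_all add: bq bqq q0 frob_add power_0_left power_add power_mult_distrib algebra_simps n0 n1 m power2_eq_square)
    done
  have ZS: "Z \<in> SU3 q"
    unfolding SU3_def Z_def
    apply (simp only: mem_Collect_eq mat3_det mat3_frob mat3_transpose Wmat_def mat3_mult)
    apply (intro conjI)
     apply (simp add: algebra_simps n0 n1 m power2_eq_square)
    apply (rule mat3_eqI)
            apply (simp_all add: q0 power_0_left algebra_simps n0 n1 m power2_eq_square)
    done
  have YS: "Y \<in> SU3 q"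
    unfolding SU3_def Y_def ai_def[symmetric]
    apply (simp only: mem_Collect_eq mat3_det mat3_frob mat3_transpose Wmat_def mat3_mult)
    apply (intro conjI)
     apply (simp add: bq algebra_simps n0 n1 m power2_eq_square aai)
    apply (rule mat3_eqI)
            apply (simp_all add: bq bqq aq aiq q0 frob_add power_0_left power_add power_mult_distrib algebra_simps n0 n1 m power2_eq_square aai)
    done
  have GS: "gen_group {X, Y, Z} \<subseteq> SU3 q"
    by (rule gen_group_SU3[OF fm f1]) (use XS YS ZS in auto)
  define s where "s = a + ai"
  have s0: "s \<noteq> 0"
  proof
    assume "s = 0"
    then have "a * s = 0" by simp
    then have "a * a + 1 = 0" unfolding s_def using aai by (simp add: algebra_simps)
    then have "a * a = 1" using m by (metis add_eq_0_iff)
    then have "a ^ 2 = 1" by (simp add: power2_eq_square)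
    moreover have "(2::nat) < q + 1" using hq4 by simp
    moreover have "\<forall>k. 0 < k \<and> k < q + 1 \<longrightarrow> a ^ k \<noteq> 1"
      using haord unfolding has_order_def by (elim conjE)
    ultimately show False by (metis zero_less_numeral)
  qed
  define p where "p = a * b + ai * b ^ q"
  have bq0: "b ^ q \<noteq> 0" using hb0 by simp
  have irr: "irreducible3 (gen_group {X, Y, Z})"
    unfolding irreducible3_def
  proof (rule notI, elim exE conjE)
    fix U :: "('a^3) set"
    assume sU: "vec.subspace U" and dU: "vec.dim U \<in> {1, 2}"
      and inv: "\<forall>g\<in>gen_group {X, Y, Z}. (\<lambda>v. v v* g) ` U = U"
    have cl: "v v* g \<in> U" if "v \<in> U" "g \<in> {X, Y, Z}" for v g
    proof -
      have "g \<in> gen_group {X, Y, Z}" using that(2) by (rule gen_group.gen)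
      then have "(\<lambda>v. v v* g) ` U = U" using inv by blast
      then show ?thesis using that(1) by blast
    qed
    have clX: "v v* X \<in> U" if "v \<in> U" for v using cl[OF that] by simp
    have clY: "v v* Y \<in> U" if "v \<in> U" for v using cl[OF that] by simp
    have clZ: "v v* Z \<in> U" if "v \<in> U" for v using cl[OF that] by simp
    define e1 where "e1 = (vector [1, 0, 0] :: 'a^3)"
    define e2 where "e2 = (vector [0, 1, 0] :: 'a^3)"
    define e3 where "e3 = (vector [0, 0, 1] :: 'a^3)"
    have key1: "e3 \<in> U" if "v \<in> U" "v $ 1 \<noteq> 0" for v
    proof -
      have "e3 = inverse (v $ 1) *s (v v* Z - v)"
        using that(2) by (simp add: vec_eq_iff forall_3 Z_def mat3_vmult e3_def algebra_simps)
      moreover have "inverse (v $ 1) *s (v v* Z - v) \<in> U"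
        by (intro vec.subspace_scale[OF sU] vec.subspace_diff[OF sU] clZ that(1))
      ultimately show ?thesis by simp
    qed
    have "\<not> U \<subseteq> {0}"
    proof
      assume "U \<subseteq> {0}"
      then have "vec.dim U = 0" by (rule vec.dim_eq_0[THEN iffD2])
      then show False using dU by (simp del: vec.dim_eq_0)
    qed
    then obtain v where vU: "v \<in> U" and v0: "v \<noteq> 0" by blast
    have e3U: "e3 \<in> U"
    proof (cases "v $ 1 = 0")
      case False then show ?thesis using key1 vU by blast
    next
      case v1: True
      show ?thesis
      proof (cases "v $ 3 = 0")
        case False
        have "(v v* Y) $ 1 = v $ 3 * s"
          using v1 by (simp add: Y_def mat3_vmult s_def ai_def)
        then have "(v v* Y) $ 1 \<noteq> 0" using False s0 by simp
        then show ?thesis using key1 clY[OF vU] by blast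
      next
        case v3: True
        have "v $ 2 \<noteq> 0" using v0 v1 v3 by (auto simp: vec_eq_iff forall_3)
        moreover have "(v v* X) $ 1 = v $ 2 * b ^ q"
          using v1 v3 by (simp add: X_def mat3_vmult)
        ultimately have "(v v* X) $ 1 \<noteq> 0" using bq0 by simp
        then show ?thesis using key1 clX[OF vU] by blast
      qed
    qed
    have e3Y: "e3 v* Y = vector [s, 0, p]"
      by (simp add: Y_def mat3_vmult e3_def s_def p_def ai_def)
    have "e1 = inverse s *s (e3 v* Y - p *s e3)"
      using s0 unfolding e3Y by (simp add: vec_eq_iff forall_3 e1_def e3_def)
    moreover have "inverse s *s (e3 v* Y - p *s e3) \<in> U"
      by (intro vec.subspace_scale[OF sU] vec.subspace_diff[OF sU] clY e3U)
    ultimately have e1U: "e1 \<in> U" by simp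
    have "e2 = e1 v* X - b *s e1 - e3"
      by (simp add: vec_eq_iff forall_3 X_def mat3_vmult e1_def e2_def e3_def)
    moreover have "e1 v* X - b *s e1 - e3 \<in> U"
      by (intro vec.subspace_scale[OF sU] vec.subspace_diff[OF sU] clX e1U e3U)
    ultimately have e2U: "e2 \<in> U" by simp
    have "w \<in> U" for w
    proof -
      have "w = w $ 1 *s e1 + w $ 2 *s e2 + w $ 3 *s e3"
        by (simp add: vec_eq_iff forall_3 e1_def e2_def e3_def)
      moreover have "w $ 1 *s e1 + w $ 2 *s e2 + w $ 3 *s e3 \<in> U"
        by (intro vec.subspace_scale[OF sU] vec.subspace_add[OF sU] e1U e2U e3U)
      ultimately show ?thesis by simp
    qed
    then have "U = UNIV" by auto
    then have "vec.dim U = 3" using vec_dim_card[where 'a='a and 'n=3] by simp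
    then show False using dU by simp
  qed
  show ?thesis using GS irr by blast
qed

end
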